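(* Let $N\ge2$ and let $W_N=|W_N\rangle\langle W_N|$, where $|W_N\rangle=\frac{1}{\sqrt N}(|10\cdots0\rangle+|01\cdots0\rangle+\cdots+|00\cdots1\rangle)$. Then $C_S(W_N)\ge N-1$.
   Context: $\mathbb{I},\sigma_X,\sigma_Y,\sigma_Z$ are the identity and Pauli matrices. The notation $\sum_\pi \mathbb{I}^{\otimes j}\otimes A^{\otimes (N-j)}$ denotes the sum, over all distinct placements, of tensor products in which exactly $j$ of the $N$ factors are $\mathbb{I}$ and the other $N-j$ are $A$ (each distinct arrangement counted once). Measurement complexity: for an $N$-qubit permutation-invariant operator $\rho$, $C_S(\rho)$ is the minimal $n_A$ such that there exist real $b_i,c_i,d_i$ and real $\alpha_{ij}$ ($1\le i\le n_A$, $0\le j\le N$) with $\rho=\sum_{i=1}^{n_A}\sum_{j=0}^{N}\alpha_{ij}\sum_\pi\mathbb{I}^{\otimes j}\otimes A_i^{\otimes(N-j)}$, $A_i=b_i\sigma_X+c_i\sigma_Y+d_i\sigma_Z$. *)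

theory Defs
  imports Complex_Main
begin

text \<open>Single-qubit operators as 2x2 complex matrices indexed by bool
  (False = |0>, True = |1>). N-qubit operators as complex-valued functions of
  pairs of bit strings (bool lists); only entries for strings of length N matter.\<close>

type_synonym qop1 = "bool \<Rightarrow> bool \<Rightarrow> complex"
type_synonym qopN = "bool list \<Rightarrow> bool list \<Rightarrow> complex"

definition Id1 :: qop1 where
  "Id1 x y = (if x = y then 1 else 0)"

definition sigmaX :: qop1 where
  "sigmaX x y = (if x \<noteq> y then 1 else 0)"

definition sigmaY :: qop1 where
  "sigmaY x y = (if x = False \<and> y = True then - \<i> else if x = True \<and> y = False then \<i> else 0)"

definition sigmaZ :: qop1 where
  "sigmaZ x y = (if x = y then (if x then -1 else 1) else 0)"

definition tensorN :: "nat \<Rightarrow> (nat \<Rightarrow> qop1) \<Rightarrow> qopN" where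
  "tensorN N M x y = (\<Prod>k<N. M k (x ! k) (y ! k))"

definition sym_sum :: "nat \<Rightarrow> nat \<Rightarrow> qop1 \<Rightarrow> qopN" where
  "sym_sum N j A x y =
     (\<Sum>S\<in>{S. S \<subseteq> {..<N} \<and> card S = j}.
        tensorN N (\<lambda>k. if k \<in> S then Id1 else A) x y)"

definition pauli_comb :: "real \<Rightarrow> real \<Rightarrow> real \<Rightarrow> qop1" where
  "pauli_comb b c d x y = of_real b * sigmaX x y + of_real c * sigmaY x y + of_real d * sigmaZ x y"

definition CS_decomp :: "nat \<Rightarrow> qopN \<Rightarrow> nat \<Rightarrow> bool" where
  "CS_decomp N rho n \<longleftrightarrow>
     (\<exists>(b::nat \<Rightarrow> real) (c::nat \<Rightarrow> real) (d::nat \<Rightarrow> real) (alpha::nat \<Rightarrow> nat \<Rightarrow> real).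
        \<forall>x y. length x = N \<longrightarrow> length y = N \<longrightarrow>
          rho x y = (\<Sum>i=1..n. \<Sum>j=0..N.
                       of_real (alpha i j) * sym_sum N j (pauli_comb (b i) (c i) (d i)) x y))"

definition C_S :: "nat \<Rightarrow> qopN \<Rightarrow> nat" where
  "C_S N rho = (LEAST n. CS_decomp N rho n)"

definition W_ket :: "nat \<Rightarrow> bool list \<Rightarrow> complex" where
  "W_ket N x = (if length x = N \<and> length (filter id x) = 1 then 1 / of_real (sqrt (real N)) else 0)"

definition W_op :: "nat \<Rightarrow> qopN" where
  "W_op N x y = W_ket N x * cnj (W_ket N y)"

end

theory Submission
  imports Defs
begin


lemma rank_lb:
  fixes l P Q :: "nat \<Rightarrow> complex"
  assumes "finite I" "1 \<le> k" "k \<le> N"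
    "(\<Sum>i\<in>I. l i * P i ^ k * Q i ^ (N - k)) \<noteq> 0"
    "\<forall>j. k < j \<and> j \<le> N \<longrightarrow> (\<Sum>i\<in>I. l i * P i ^ j * Q i ^ (N - j)) = 0"
  shows "N + 1 \<le> card I + k"
  using assms
proof (induction N arbitrary: I l)
  case 0
  then show ?case by simp
next
  case (Suc M)
  show ?case
  proof (cases "k = Suc M")
    case True
    then have "I \<noteq> {}" using Suc.prems(4) by auto
    then have "card I \<ge> 1" using Suc.prems(1) by (simp add: Suc_leI card_gt_0_iff)
    then show ?thesis using True by simp
  next
    case False
    then have kM: "k \<le> M" using Suc.prems(3) by simp
    have "\<exists>i0\<in>I. l i0 * P i0 ^ k * Q i0 ^ (Suc M - k) \<noteq> 0"
    proof (rule ccontr)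
      assume "\<not> ?thesis"
      then have "\<forall>i\<in>I. l i * P i ^ k * Q i ^ (Suc M - k) = 0" by auto
      then show False using Suc.prems(4) sum.neutral[of I "\<lambda>i. l i * P i ^ k * Q i ^ (Suc M - k)"] by blast
    qed
    then obtain i0 where i0: "i0 \<in> I" "l i0 * P i0 ^ k * Q i0 ^ (Suc M - k) \<noteq> 0" by blast
    have P0: "P i0 \<noteq> 0" using i0(2) Suc.prems(2) by (auto simp: zero_power)
    define l' where "l' i = l i * (Q i0 * P i - P i0 * Q i)" for i
    define m where "m j = (\<Sum>i\<in>I. l i * P i ^ j * Q i ^ (Suc M - j))" for j
    have key: "(\<Sum>i\<in>I - {i0}. l' i * P i ^ j * Q i ^ (M - j)) = Q i0 * m (Suc j) - P i0 * m j"
      if "j \<le> M" for j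
    proof -
      have "(\<Sum>i\<in>I - {i0}. l' i * P i ^ j * Q i ^ (M - j)) = (\<Sum>i\<in>I. l' i * P i ^ j * Q i ^ (M - j))"
        using Suc.prems(1) i0(1) by (intro sum.mono_neutral_left) (auto simp: l'_def)
      also have "\<dots> = (\<Sum>i\<in>I. Q i0 * (l i * P i ^ Suc j * Q i ^ (Suc M - Suc j)) - P i0 * (l i * P i ^ j * Q i ^ (Suc M - j)))"
      proof (intro sum.cong refl)
        fix i
        have e: "Suc M - j = Suc (M - j)" using that by simp
        show "l' i * P i ^ j * Q i ^ (M - j) = Q i0 * (l i * P i ^ Suc j * Q i ^ (Suc M - Suc j)) - P i0 * (l i * P i ^ j * Q i ^ (Suc M - j))"
          unfolding l'_def e by (simp add: algebra_simps)
      qed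
      also have "\<dots> = Q i0 * m (Suc j) - P i0 * m j"
        unfolding m_def by (simp add: sum_subtractf sum_distrib_left)
      finally show ?thesis .
    qed
    have "M + 1 \<le> card (I - {i0}) + k"
    proof (rule Suc.IH)
      show "finite (I - {i0})" using Suc.prems(1) by simp
      show "1 \<le> k" by fact
      show "k \<le> M" by fact
      have "m (Suc k) = 0" using Suc.prems(5) kM unfolding m_def by auto
      moreover have "m k \<noteq> 0" using Suc.prems(4) unfolding m_def by simp
      ultimately show "(\<Sum>i\<in>I - {i0}. l' i * P i ^ k * Q i ^ (M - k)) \<noteq> 0"
        using key[OF kM] P0 by simp
      show "\<forall>j. k < j \<and> j \<le> M \<longrightarrow> (\<Sum>i\<in>I - {i0}. l' i * P i ^ j * Q i ^ (M - j)) = 0"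
      proof (intro allI impI)
        fix j assume j: "k < j \<and> j \<le> M"
        have "m (Suc j) = 0" using Suc.prems(5)[rule_format, of "Suc j"] j unfolding m_def by simp
        moreover have "m j = 0" using Suc.prems(5)[rule_format, of j] j unfolding m_def by simp
        ultimately show "(\<Sum>i\<in>I - {i0}. l' i * P i ^ j * Q i ^ (M - j)) = 0" using key j by simp
      qed
    qed
    moreover have "Suc (card (I - {i0})) = card I"
      by (rule card_Suc_Diff1[OF Suc.prems(1) i0(1)])
    ultimately show ?thesis by simp
  qed
qed




definition blists :: "nat \<Rightarrow> bool list set" where "blists N = {xs. length xs = N}"

lemma finite_blists: "finite (blists N)"
proof -
  have "blists N = {xs. set xs \<subseteq> UNIV \<and> length xs = N}" by (simp add: blists_def)
  then show ?thesis using finite_lists_length_eq[of "UNIV::bool set" N] by simp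
qed

lemma blists_Suc: "blists (Suc N) = (\<lambda>(a,xs). a # xs) ` (UNIV \<times> blists N)"
  by (auto simp: blists_def image_iff length_Suc_conv)

lemma sum_blists_prod:
  fixes g :: "nat \<Rightarrow> bool \<Rightarrow> 'a::comm_semiring_1"
  shows "(\<Sum>x\<in>blists N. \<Prod>k<N. g k (x!k)) = (\<Prod>k<N. \<Sum>a\<in>UNIV. g k a)"
proof (induction N arbitrary: g)
  case 0
  have "blists 0 = {[]}" by (auto simp: blists_def)
  then show ?case by simp
next
  case (Suc N)
  have inj: "inj_on (\<lambda>(a,xs). a # xs) (UNIV \<times> blists N)" by (auto simp: inj_on_def)
  have "(\<Sum>x\<in>blists (Suc N). \<Prod>k<Suc N. g k (x!k))
      = (\<Sum>p\<in>UNIV \<times> blists N. \<Prod>k<Suc N. g k ((fst p # snd p)!k))"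
    unfolding blists_Suc by (subst sum.reindex[OF inj]) (simp add: case_prod_beta)
  also have "\<dots> = (\<Sum>p\<in>UNIV \<times> blists N. g 0 (fst p) * (\<Prod>k<N. g (Suc k) (snd p ! k)))"
    by (simp add: prod.lessThan_Suc_shift del: prod.lessThan_Suc)
  also have "\<dots> = (\<Sum>a\<in>UNIV. \<Sum>xs\<in>blists N. g 0 a * (\<Prod>k<N. g (Suc k) (xs ! k)))"
    by (simp only: sum.cartesian_product split_def)
  also have "\<dots> = (\<Sum>a\<in>UNIV. g 0 a) * (\<Sum>xs\<in>blists N. \<Prod>k<N. g (Suc k) (xs!k))"
    by (rule sum_product[symmetric])
  also have "\<dots> = (\<Sum>a\<in>UNIV. g 0 a) * (\<Prod>k<N. \<Sum>a\<in>UNIV. g (Suc k) a)"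
    using Suc.IH[of "\<lambda>k. g (Suc k)"] by simp
  also have "\<dots> = (\<Prod>k<Suc N. \<Sum>a\<in>UNIV. g k a)" by (simp add: prod.lessThan_Suc_shift del: prod.lessThan_Suc)
  finally show ?case .
qed

definition Pst :: "nat \<Rightarrow> nat \<Rightarrow> qop1" where "Pst j k = (if k < j then sigmaX else sigmaZ)"

definition Lf :: "nat \<Rightarrow> nat \<Rightarrow> qopN \<Rightarrow> complex" where
  "Lf N j rho = (\<Sum>x\<in>blists N. \<Sum>y\<in>blists N. tensorN N (Pst j) y x * rho x y)"

definition tr1 :: "qop1 \<Rightarrow> qop1 \<Rightarrow> complex" where
  "tr1 P M = (\<Sum>a\<in>UNIV. \<Sum>b\<in>UNIV. P b a * M a b)"

lemma Lf_tensor: "Lf N j (tensorN N M) = (\<Prod>k<N. tr1 (Pst j k) (M k))"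
proof -
  have "Lf N j (tensorN N M) = (\<Sum>x\<in>blists N. \<Prod>k<N. \<Sum>b\<in>UNIV. Pst j k b (x!k) * M k (x!k) b)"
    unfolding Lf_def tensorN_def
  proof (rule sum.cong[OF refl])
    fix x
    show "(\<Sum>y\<in>blists N. (\<Prod>k<N. Pst j k (y ! k) (x ! k)) * (\<Prod>k<N. M k (x ! k) (y ! k))) =
         (\<Prod>k<N. \<Sum>b\<in>UNIV. Pst j k b (x ! k) * M k (x ! k) b)"
      using sum_blists_prod[of "\<lambda>k b. Pst j k b (x!k) * M k (x!k) b" N]
      by (simp add: prod.distrib)
  qed
  also have "\<dots> = (\<Prod>k<N. tr1 (Pst j k) (M k))"
    using sum_blists_prod[of "\<lambda>k a. \<Sum>b\<in>UNIV. Pst j k b a * M k a b" N]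
    by (simp add: tr1_def)
  finally show ?thesis .
qed

lemma Lf_sum: "finite F \<Longrightarrow> Lf N j (\<lambda>x y. \<Sum>S\<in>F. f S x y) = (\<Sum>S\<in>F. Lf N j (f S))"
  unfolding Lf_def
  by (simp add: sum_distrib_left sum.swap[of _ F])

lemma Lf_scale: "Lf N j (\<lambda>x y. c * f x y) = c * Lf N j f"
  unfolding Lf_def by (simp add: sum_distrib_left algebra_simps)

lemma Lf_cong: "(\<And>x y. length x = N \<Longrightarrow> length y = N \<Longrightarrow> f x y = g x y) \<Longrightarrow> Lf N j f = Lf N j g"
  unfolding Lf_def blists_def by (intro sum.cong refl) auto

lemma UNIV_bool': "(UNIV::bool set) = {False, True}" by auto

lemma tr1_Id: "tr1 (Pst j k) Id1 = 0"
  by (simp add: tr1_def Pst_def sigmaX_def sigmaZ_def Id1_def UNIV_bool')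

lemma tr1_A: "tr1 (Pst j k) (pauli_comb b c d) = (if k < j then 2 * of_real b else 2 * of_real d)"
  by (simp add: tr1_def Pst_def sigmaX_def sigmaY_def sigmaZ_def pauli_comb_def UNIV_bool')

lemma Lf_sym: "Lf N j (sym_sum N jj A) = (if jj = 0 then \<Prod>k<N. tr1 (Pst j k) A else 0)"
proof -
  let ?F = "{S. S \<subseteq> {..<N} \<and> card S = jj}"
  have fin: "finite ?F" by (rule finite_subset[of _ "Pow {..<N}"]) auto
  have "Lf N j (sym_sum N jj A) = (\<Sum>S\<in>?F. Lf N j (tensorN N (\<lambda>k. if k \<in> S then Id1 else A)))"
    unfolding sym_sum_def[abs_def] by (rule Lf_sum[OF fin])
  also have "\<dots> = (\<Sum>S\<in>?F. \<Prod>k<N. tr1 (Pst j k) (if k \<in> S then Id1 else A))"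
    by (simp add: Lf_tensor)
  also have "\<dots> = (if jj = 0 then \<Prod>k<N. tr1 (Pst j k) A else 0)"
  proof (cases "jj = 0")
    case True
    have "?F = {{}}" using True by (auto dest: finite_subset)
    then show ?thesis using True by simp
  next
    case False
    have z: "(\<Prod>k<N. tr1 (Pst j k) (if k \<in> S then Id1 else A)) = 0" if "S \<in> ?F" for S
    proof -
      from that False have "S \<noteq> {}" "S \<subseteq> {..<N}" by auto
      then obtain k where "k \<in> S" "k < N" by blast
      then show ?thesis by (intro prod_zero) (auto intro!: bexI[of _ k] simp: tr1_Id)
    qed
    have "(\<Sum>S\<in>?F. \<Prod>k<N. tr1 (Pst j k) (if k \<in> S then Id1 else A)) = 0"
      by (rule sum.neutral) (use z in blast)
    then show ?thesis using False by simp
  qed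
  finally show ?thesis .
qed

lemma prod_split: "j \<le> N \<Longrightarrow> (\<Prod>k<N. if k < j then u else v) = u ^ j * v ^ (N - j)"
proof (induction N)
  case 0 then show ?case by simp
next
  case (Suc N)
  show ?case
  proof (cases "j = Suc N")
    case True
    then show ?thesis by simp
  next
    case False
    then have "j \<le> N" using Suc.prems by simp
    then show ?thesis using Suc.IH by (simp add: Suc_diff_le algebra_simps)
  qed
qed

lemma Lf_symA: "j \<le> N \<Longrightarrow> Lf N j (sym_sum N jj (pauli_comb b c d)) =
   (if jj = 0 then (2 * of_real b) ^ j * (2 * of_real d) ^ (N - j) else 0)"
  by (simp add: Lf_sym tr1_A prod_split)




lemma one_true:
  assumes "length (filter id x) = 1" "i < length x" "k < length x" "x!i" "x!k"
  shows "i = k"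
proof -
  have c: "card {i. i < length x \<and> id (x ! i)} = 1"
    using assms(1) by (simp add: length_filter_conv_card)
  then obtain a where a: "{i. i < length x \<and> id (x ! i)} = {a}" by (auto simp: card_1_singleton_iff)
  have "i \<in> {i. i < length x \<and> id (x ! i)}" "k \<in> {i. i < length x \<and> id (x ! i)}"
    using assms by auto
  then show ?thesis unfolding a by simp
qed

lemma W_op_val:
  assumes "N > 0" "length x = N" "length y = N"
  shows "W_op N x y = (if length (filter id x) = 1 \<and> length (filter id y) = 1 then 1 / of_nat N else 0)"
proof -
  define a where "a = (of_real (sqrt (real N)) :: complex)"
  have s: "a * a = of_nat N"
    unfolding a_def by (simp flip: of_real_mult)
  have c: "cnj a = a" unfolding a_def by simp
  have s2: "(1 / a) * cnj (1 / a) = 1 / of_nat N"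
    using s c by (simp add: field_simps)
  show ?thesis using assms s2
    unfolding W_op_def W_ket_def a_def[symmetric] by simp
qed

definition ee :: "nat \<Rightarrow> nat \<Rightarrow> bool list" where "ee N a = map (\<lambda>k. k = a) [0..<N]"

lemma ee_len[simp]: "length (ee N a) = N" by (simp add: ee_def)
lemma ee_nth[simp]: "k < N \<Longrightarrow> ee N a ! k = (k = a)" by (simp add: ee_def)

lemma ee_one: "a < N \<Longrightarrow> length (filter id (ee N a)) = 1"
proof -
  assume a: "a < N"
  have "{k. k < N \<and> id (ee N a ! k)} = {a}" using a by auto
  then show ?thesis by (simp add: length_filter_conv_card)
qed

lemma ee_unique: "length x = N \<Longrightarrow> length (filter id x) = 1 \<Longrightarrow> a < N \<Longrightarrow> x ! a \<Longrightarrow> x = ee N a"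
  by (intro nth_equalityI) (auto intro: one_true)

lemma tensor_P_zero:
  assumes "3 \<le> j" "j \<le> N" "length x = N" "length y = N"
    "length (filter id x) = 1" "length (filter id y) = 1"
  shows "tensorN N (Pst j) y x = 0"
proof -
  have "\<exists>k<N. Pst j k (y!k) (x!k) = 0"
  proof (rule ccontr)
    assume "\<not> ?thesis"
    then have d: "y!k \<noteq> x!k" if "k < 3" for k
      using that assms(1,2) by (auto simp: Pst_def sigmaX_def split: if_splits)
    have l: "0 < length x" "1 < length x" "2 < length x" "0 < length y" "1 < length y" "2 < length y"
      using assms by auto
    show False
    proof (cases "x!0")
      case True
      have "\<not> x!1" using one_true[OF assms(5), of 0 1] l True by auto
      moreover have "\<not> x!2" using one_true[OF assms(5), of 0 2] l True by auto
      ultimately have "y!1" "y!2" using d[of 1] d[of 2] by auto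
      then show False using one_true[OF assms(6), of 1 2] l by simp
    next
      case False
      then have "y!0" using d[of 0] by auto
      have "\<not> y!1" using one_true[OF assms(6), of 0 1] l \<open>y!0\<close> by auto
      moreover have "\<not> y!2" using one_true[OF assms(6), of 0 2] l \<open>y!0\<close> by auto
      ultimately have "x!1" "x!2" using d[of 1] d[of 2] by auto
      then show False using one_true[OF assms(5), of 1 2] l by simp
    qed
  qed
  then obtain k where k: "k < N" "Pst j k (y!k) (x!k) = 0" by blast
  show ?thesis unfolding tensorN_def by (rule prod_zero) (use k in auto)
qed

lemma Lf_W_zero:
  assumes "3 \<le> j" "j \<le> N"
  shows "Lf N j (W_op N) = 0"
  unfolding Lf_def
proof (intro sum.neutral ballI)
  fix x y assume xy: "x \<in> blists N" "y \<in> blists N"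
  show "tensorN N (Pst j) y x * W_op N x y = 0"
    using W_op_val[of N x y] tensor_P_zero[OF assms, of x y] xy assms by (auto simp: blists_def)
qed

lemma Pst2_val01: "k < N \<Longrightarrow> Pst 2 k (ee N 1 ! k) (ee N 0 ! k) = 1"
  by (cases "k = 0"; cases "k = 1") (simp_all add: Pst_def sigmaX_def sigmaZ_def)

lemma Pst2_val10: "k < N \<Longrightarrow> Pst 2 k (ee N 0 ! k) (ee N 1 ! k) = 1"
  by (cases "k = 0"; cases "k = 1") (simp_all add: Pst_def sigmaX_def sigmaZ_def)

lemma tensor_P2:
  assumes "2 \<le> N" "length x = N" "length y = N"
    "length (filter id x) = 1" "length (filter id y) = 1"
  shows "tensorN N (Pst 2) y x = (if (x = ee N 0 \<and> y = ee N 1) \<or> (x = ee N 1 \<and> y = ee N 0) then 1 else 0)"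
proof (cases "x!0 \<noteq> y!0 \<and> x!1 \<noteq> y!1")
  case True
  have l: "0 < N" "1 < N" using assms by auto
  have xy: "(x = ee N 0 \<and> y = ee N 1) \<or> (x = ee N 1 \<and> y = ee N 0)"
  proof (cases "x!0")
    case c: True
    have x: "x = ee N 0" by (rule ee_unique[OF assms(2,4) l(1) c])
    have "\<not> x!1" using l unfolding x by simp
    then have "y!1" using True by blast
    have y: "y = ee N 1" by (rule ee_unique[OF assms(3,5) l(2) \<open>y!1\<close>])
    show ?thesis using x y by blast
  next
    case c: False
    then have "y!0" using True by blast
    have y: "y = ee N 0" by (rule ee_unique[OF assms(3,5) l(1) \<open>y!0\<close>])
    have "\<not> y!1" using l unfolding y by simp
    then have "x!1" using True by blast
    have x: "x = ee N 1" by (rule ee_unique[OF assms(2,4) l(2) \<open>x!1\<close>])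
    show ?thesis using x y by blast
  qed
  have "tensorN N (Pst 2) y x = 1"
  proof (cases "x = ee N 0 \<and> y = ee N 1")
    case True
    then have x: "x = ee N 0" and y: "y = ee N 1" by auto
    show ?thesis unfolding tensorN_def x y
      by (intro prod.neutral ballI) (rule Pst2_val01, simp)
  next
    case False
    then have x: "x = ee N 1" and y: "y = ee N 0" using xy by auto
    show ?thesis unfolding tensorN_def x y
      by (intro prod.neutral ballI) (rule Pst2_val10, simp)
  qed
  then show ?thesis using xy by simp
next
  case False
  have l: "0 < N" "1 < N" using assms by auto
  have "\<exists>k\<in>{..<N}. Pst 2 k (y ! k) (x ! k) = 0"
  proof (cases "x!0 = y!0")
    case True
    then show ?thesis using l by (intro bexI[of _ 0]) (simp_all add: Pst_def sigmaX_def)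
  next
    case False
    then have "x!1 = y!1" using \<open>\<not> (x!0 \<noteq> y!0 \<and> x!1 \<noteq> y!1)\<close> by blast
    then show ?thesis using l by (intro bexI[of _ 1]) (simp_all add: Pst_def sigmaX_def)
  qed
  then have "tensorN N (Pst 2) y x = 0"
    unfolding tensorN_def by (rule prod_zero[rotated]) simp
  moreover have "\<not> ((x = ee N 0 \<and> y = ee N 1) \<or> (x = ee N 1 \<and> y = ee N 0))"
  proof
    assume "(x = ee N 0 \<and> y = ee N 1) \<or> (x = ee N 1 \<and> y = ee N 0)"
    then have "x!0 \<noteq> y!0 \<and> x!1 \<noteq> y!1" using l by auto
    then show False using False by blast
  qed
  ultimately show ?thesis by simp
qed

lemma sum_two:
  assumes "finite X" "p \<in> X" "q \<in> X" "p \<noteq> q"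
  shows "(\<Sum>x\<in>X. \<Sum>y\<in>X. if (x = p \<and> y = q) \<or> (x = q \<and> y = p) then c else 0) = 2 * (c::complex)"
proof -
  have "(\<Sum>y\<in>X. if (x = p \<and> y = q) \<or> (x = q \<and> y = p) then c else 0) = (if x = p \<or> x = q then c else 0)" for x
    using assms by (cases "x = p"; cases "x = q") auto
  then have "(\<Sum>x\<in>X. \<Sum>y\<in>X. if (x = p \<and> y = q) \<or> (x = q \<and> y = p) then c else 0) =
     (\<Sum>x\<in>X. (if x = p then c else 0) + (if x = q then c else 0))"
    using assms by (intro sum.cong) auto
  also have "\<dots> = 2 * c" using assms by (simp add: sum.distrib)
  finally show ?thesis .
qed

lemma Lf_W_two:
  assumes "2 \<le> N"
  shows "Lf N 2 (W_op N) = 2 / of_nat N"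
proof -
  have "Lf N 2 (W_op N) = (\<Sum>x\<in>blists N. \<Sum>y\<in>blists N.
      if (x = ee N 0 \<and> y = ee N 1) \<or> (x = ee N 1 \<and> y = ee N 0) then 1 / of_nat N else 0)"
    unfolding Lf_def
  proof (intro sum.cong refl)
    fix x y assume xy: "x \<in> blists N" "y \<in> blists N"
    show "tensorN N (Pst 2) y x * W_op N x y =
      (if (x = ee N 0 \<and> y = ee N 1) \<or> (x = ee N 1 \<and> y = ee N 0) then 1 / of_nat N else 0)"
    proof (cases "length (filter id x) = 1 \<and> length (filter id y) = 1")
      case True
      then show ?thesis using tensor_P2[OF assms, of x y] W_op_val[of N x y] xy assms
        by (auto simp: blists_def)
    next
      case False
      have "\<not> ((x = ee N 0 \<and> y = ee N 1) \<or> (x = ee N 1 \<and> y = ee N 0))"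
        using False ee_one[of 0 N] ee_one[of 1 N] assms by auto
      then show ?thesis using False W_op_val[of N x y] xy assms by (auto simp: blists_def)
    qed
  qed
  also have "\<dots> = 2 * (1 / of_nat N)"
  proof (rule sum_two)
    show "finite (blists N)" by (rule finite_blists)
    show "ee N 0 \<in> blists N" "ee N 1 \<in> blists N" by (auto simp: blists_def)
    have "ee N 0 ! 0 \<noteq> ee N 1 ! 0" using assms by simp
    then show "ee N 0 \<noteq> ee N 1" by metis
  qed
  finally show ?thesis by simp
qed

lemma lower:
  assumes N: "2 \<le> N" and D: "CS_decomp N (W_op N) n"
  shows "N - 1 \<le> n"
proof -
  obtain b c d alpha where H: "\<forall>x y. length x = N \<longrightarrow> length y = N \<longrightarrow>
          W_op N x y = (\<Sum>i=1..n. \<Sum>j=0..N.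
                       of_real (alpha i j) * sym_sum N j (pauli_comb (b i) (c i) (d i)) x y)"
    using D unfolding CS_decomp_def by blast
  define m where "m j = (\<Sum>i\<in>{1..n}. of_real (alpha i 0) * (2 * of_real (b i)) ^ j * (2 * of_real (d i)) ^ (N - j) :: complex)" for j
  have Lm: "Lf N j (W_op N) = m j" if "j \<le> N" for j
  proof -
    have "Lf N j (W_op N) = Lf N j (\<lambda>x y. \<Sum>i=1..n. \<Sum>jj=0..N.
                       of_real (alpha i jj) * sym_sum N jj (pauli_comb (b i) (c i) (d i)) x y)"
      using H by (intro Lf_cong) auto
    also have "\<dots> = (\<Sum>i=1..n. \<Sum>jj=0..N. of_real (alpha i jj) * Lf N j (sym_sum N jj (pauli_comb (b i) (c i) (d i))))"
      by (simp add: Lf_sum Lf_scale)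
    also have "\<dots> = (\<Sum>i=1..n. \<Sum>jj=0..N. of_real (alpha i jj) *
        (if jj = 0 then (2 * of_real (b i)) ^ j * (2 * of_real (d i)) ^ (N - j) else 0))"
      using that by (simp add: Lf_symA)
    also have "\<dots> = m j"
      unfolding m_def by (intro sum.cong refl) (simp add: if_distrib sum.delta cong: if_cong)
    finally show ?thesis .
  qed
  have "N + 1 \<le> card {1..n} + 2"
  proof (rule rank_lb[of "{1..n}" 2 N "\<lambda>i. (of_real (alpha i 0) :: complex)" "\<lambda>i. 2 * (of_real (b i) :: complex)" "\<lambda>i. 2 * (of_real (d i) :: complex)"])
    show "finite {1..n}" by simp
    show "1 \<le> (2::nat)" by simp
    show "2 \<le> N" by fact
    have nz: "(2::complex) / of_nat N \<noteq> 0" using N by simp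
    have e: "Lf N 2 (W_op N) = m 2" using Lm N by simp
    have "m 2 = 2 / of_nat N" using e Lf_W_two[OF N] by simp
    then have "m 2 \<noteq> 0" using nz by simp
    then show "(\<Sum>i\<in>{1..n}. (of_real (alpha i 0) :: complex) * (2 * of_real (b i)) ^ 2 * (2 * of_real (d i)) ^ (N - 2)) \<noteq> 0"
      unfolding m_def .
    show "\<forall>j. 2 < j \<and> j \<le> N \<longrightarrow> (\<Sum>i\<in>{1..n}. (of_real (alpha i 0) :: complex) * (2 * of_real (b i)) ^ j * (2 * of_real (d i)) ^ (N - j)) = 0"
    proof (intro allI impI)
      fix j assume j: "2 < j \<and> j \<le> N"
      have a: "Lf N j (W_op N) = m j" by (rule Lm) (use j in simp)
      have b: "Lf N j (W_op N) = 0" by (rule Lf_W_zero) (use j in auto)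
      from a b have "m j = 0" by simp
      then show "(\<Sum>i\<in>{1..n}. (of_real (alpha i 0) :: complex) * (2 * of_real (b i)) ^ j * (2 * of_real (d i)) ^ (N - j)) = 0"
        unfolding m_def .
    qed
  qed
  then show ?thesis by simp
qed




definition mom :: "(real \<times> real) list \<Rightarrow> nat \<Rightarrow> real" where
  "mom cs a = sum_list (map (\<lambda>p. fst p * snd p ^ a) cs)"

lemma mom_append[simp]: "mom (xs @ ys) a = mom xs a + mom ys a" by (simp add: mom_def)

lemma mom_Cons: "mom (p # cs) a = fst p * snd p ^ a + mom cs a" by (simp add: mom_def)

lemma mom_scale: "mom (map (\<lambda>p. (r * fst p, snd p)) cs) a = r * mom cs a"
  by (induction cs) (simp_all add: mom_def algebra_simps)

lemma mom_shift: "mom (map (\<lambda>p. (fst p, snd p + 1)) cs) a = (\<Sum>v\<le>a. of_nat (a choose v) * mom cs v)"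
proof (induction cs)
  case Nil then show ?case by (simp add: mom_def)
next
  case (Cons p cs)
  have e: "(snd p + 1) ^ a = (\<Sum>v\<le>a. of_nat (a choose v) * snd p ^ v)"
    using binomial_ring[of "snd p" 1 a] by simp
  have "mom (map (\<lambda>p. (fst p, snd p + 1)) (p # cs)) a = fst p * (snd p + 1) ^ a + mom (map (\<lambda>p. (fst p, snd p + 1)) cs) a"
    by (simp add: mom_Cons)
  also have "\<dots> = (\<Sum>v\<le>a. of_nat (a choose v) * (fst p * snd p ^ v)) + (\<Sum>v\<le>a. of_nat (a choose v) * mom cs v)"
    unfolding e Cons.IH by (simp add: sum_distrib_left algebra_simps)
  also have "\<dots> = (\<Sum>v\<le>a. of_nat (a choose v) * mom (p # cs) v)"
    by (simp add: mom_Cons sum.distrib algebra_simps)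
  finally show ?case .
qed

lemma mom_dual: "k \<le> N \<Longrightarrow> \<exists>cs. (\<forall>p\<in>set cs. 0 \<le> snd p) \<and> (\<forall>a\<le>N. mom cs a = (if a = k then 1 else 0))"
proof (induction N arbitrary: k)
  case 0
  have k0: "k = 0" using 0 by simp
  show ?case
  proof (rule exI[of _ "[(1,0)]"], intro conjI ballI allI impI)
    fix p :: "real \<times> real" assume "p \<in> set [(1,0)]"
    then show "0 \<le> snd p" by simp
  next
    fix a :: nat assume "a \<le> 0"
    then show "mom [(1,0)] a = (if a = k then 1 else 0)" using k0 by (simp add: mom_def)
  qed
next
  case (Suc N)
  obtain D where D: "\<forall>p\<in>set D. 0 \<le> snd p" "\<forall>a\<le>N. mom D a = (if a = N then 1 else 0)"
    using Suc.IH[of N] by auto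
  define G where "G = map (\<lambda>p. (1/(real N+1) * fst p, snd p)) (map (\<lambda>p. (fst p, snd p + 1)) D) @ map (\<lambda>p. (-1/(real N+1) * fst p, snd p)) D"
  have Gnn: "\<forall>p\<in>set G. 0 \<le> snd p" using D(1) by (auto simp: G_def)
  have Gm: "mom G a = 1/(real N+1) * (\<Sum>v\<le>a. of_nat (a choose v) * mom D v) - 1/(real N+1) * mom D a" for a
    unfolding G_def by (simp only: mom_append mom_scale mom_shift)
  have G1: "\<forall>a\<le>Suc N. mom G a = (if a = Suc N then 1 else 0)"
  proof (intro allI impI)
    fix a assume a: "a \<le> Suc N"
    show "mom G a = (if a = Suc N then 1 else 0)"
    proof (cases "a = Suc N")
      case True
      have "(\<Sum>v\<le>N. of_nat (Suc N choose v) * mom D v) = (\<Sum>v\<le>N. of_nat (Suc N choose v) * (if v = N then 1 else 0))"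
        using D(2) by (intro sum.cong) auto
      also have "\<dots> = (\<Sum>v\<le>N. if v = N then real (Suc N choose v) else 0)"
        by (intro sum.cong) auto
      also have "\<dots> = real (Suc N)" by (simp add: sum.delta)
      finally have s: "(\<Sum>v\<le>N. of_nat (Suc N choose v) * mom D v) = real (Suc N)" .
      have "(\<Sum>v\<le>Suc N. of_nat (Suc N choose v) * mom D v) = real (Suc N) + mom D (Suc N)"
        using s by simp
      then have "mom G a = 1/(real N+1) * (real (Suc N) + mom D (Suc N)) - 1/(real N+1) * mom D (Suc N)"
        using True Gm[of a] by simp
      also have "\<dots> = 1/(real N+1) * real (Suc N)" by (simp only: distrib_left diff_add_cancel add_diff_cancel)
      also have "\<dots> = 1"
      proof -
        have "real N + 1 \<noteq> 0" by (metis add_nonneg_pos of_nat_0_le_iff zero_less_one order_less_irrefl)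
        then show ?thesis by (simp add: field_simps)
      qed
      finally show ?thesis using True by simp
    next
      case False
      then have aN: "a \<le> N" using a by simp
      have "(\<Sum>v\<le>a. of_nat (a choose v) * mom D v) = (\<Sum>v\<le>a. of_nat (a choose v) * (if v = N then 1 else 0))"
        using D(2) aN by (intro sum.cong) auto
      also have "\<dots> = (\<Sum>v\<le>a. if v = N then real (a choose v) else 0)"
        by (intro sum.cong) auto
      also have "\<dots> = (if a = N then 1 else 0)" using aN by (simp add: sum.delta)
      finally show ?thesis using Gm[of a] D(2) aN False by simp
    qed
  qed
  show ?case
  proof (cases "k = Suc N")
    case True then show ?thesis using Gnn G1 by blast
  next
    case False
    then have kN: "k \<le> N" using Suc.prems by simp
    obtain E where E: "\<forall>p\<in>set E. 0 \<le> snd p" "\<forall>a\<le>N. mom E a = (if a = k then 1 else 0)"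
      using Suc.IH[OF kN] by auto
    define E' where "E' = E @ map (\<lambda>p. (- mom E (Suc N) * fst p, snd p)) G"
    show ?thesis
    proof (intro exI[of _ E'] conjI allI impI)
      show "\<forall>p\<in>set E'. 0 \<le> snd p" using E(1) Gnn by (auto simp: E'_def)
      fix a assume a: "a \<le> Suc N"
      have m: "mom E' a = mom E a - mom E (Suc N) * mom G a"
        unfolding E'_def mom_append mom_scale by simp
      show "mom E' a = (if a = k then 1 else 0)"
      proof (cases "a = Suc N")
        case True then show ?thesis using m G1 False by simp
      next
        case F2: False
        then show ?thesis using m G1 E(2) a by simp
      qed
    qed
  qed
qed

lemma avg_phase:
  assumes K: "K > 0" and m: "\<bar>m\<bar> < int K"
  shows "(\<Sum>l<K. cis (2 * pi * real l * real_of_int m / real K)) = (if m = 0 then of_nat K else 0)"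
proof (cases "m = 0")
  case True then show ?thesis by simp
next
  case False
  define w where "w = cis (2 * pi * real_of_int m / real K)"
  have pw: "cis (2 * pi * real l * real_of_int m / real K) = w ^ l" for l
    by (simp add: w_def DeMoivre mult_ac)
  have w1: "w \<noteq> 1"
  proof
    assume "w = 1"
    then have "Re w = 1" by simp
    then have "cos (2 * pi * real_of_int m / real K) = 1"
      by (simp add: w_def)
    then obtain n :: int where n: "2 * pi * real_of_int m / real K = real_of_int n * 2 * pi"
      by (auto simp: cos_one_2pi_int)
    then have "real_of_int m = real_of_int n * real K" using K by (simp add: field_simps)
    then have mn: "m = n * int K" by (metis of_int_eq_iff of_int_mult of_int_of_nat_eq)
    then have "n \<noteq> 0" using False by auto
    then have "\<bar>n\<bar> * int K \<ge> int K" using K by (simp add: mult_le_cancel_right1)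
    then show False using m mn by (simp add: abs_mult)
  qed
  have wK: "w ^ K = 1"
  proof -
    have "w ^ K = cis (2 * pi * real_of_int m)" using K by (simp add: w_def DeMoivre)
    also have "\<dots> = 1" by (rule cis_multiple_2pi) simp
    finally show ?thesis .
  qed
  have "(\<Sum>l<K. w ^ l) = 0" using geometric_sum[OF w1, of K] wK by simp
  then show ?thesis using pw False by simp
qed




lemma prod_count: "f False = 1 \<Longrightarrow> (\<Prod>k<length x. f (x!k)) = f True ^ length (filter id x)"
proof (induction x)
  case Nil then show ?case by simp
next
  case (Cons a xs)
  have "(\<Prod>k<length (a # xs). f ((a # xs) ! k)) = f a * (\<Prod>k<length xs. f (xs ! k))"
    by (simp add: prod.lessThan_Suc_shift del: prod.lessThan_Suc)
  then show ?case using Cons by (cases a) simp_all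
qed

lemma prod_sym_sum:
  "(\<Prod>k<N. of_real s * Id1 (x!k) (y!k) + A (x!k) (y!k)) = (\<Sum>j=0..N. of_real (s^j) * sym_sum N j A x y)"
proof -
  have "(\<Prod>k<N. of_real s * Id1 (x!k) (y!k) + A (x!k) (y!k)) =
      (\<Sum>S\<in>Pow {..<N}. (\<Prod>k\<in>S. of_real s * Id1 (x!k) (y!k)) * (\<Prod>k\<in>{..<N}-S. A (x!k) (y!k)))"
    by (rule prod_add) simp
  also have "\<dots> = (\<Sum>S\<in>Pow {..<N}. of_real (s ^ card S) * tensorN N (\<lambda>k. if k \<in> S then Id1 else A) x y)"
  proof (rule sum.cong[OF refl])
    fix S assume S: "S \<in> Pow {..<N}"
    then have Ss: "S \<subseteq> {..<N}" by simp
    have fin: "finite S" using Ss finite_subset by blast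
    have "tensorN N (\<lambda>k. if k \<in> S then Id1 else A) x y = (\<Prod>k<N. if k \<in> S then Id1 (x!k) (y!k) else A (x!k) (y!k))"
      unfolding tensorN_def by (intro prod.cong refl) simp
    also have "\<dots> = (\<Prod>k\<in>{..<N} \<inter> {k. k \<in> S}. Id1 (x!k) (y!k)) * (\<Prod>k\<in>{..<N} \<inter> - {k. k \<in> S}. A (x!k) (y!k))"
      by (rule prod.If_cases) simp
    also have "{..<N} \<inter> {k. k \<in> S} = S" using Ss by auto
    also have "{..<N} \<inter> - {k. k \<in> S} = {..<N} - S" by auto
    finally have t: "tensorN N (\<lambda>k. if k \<in> S then Id1 else A) x y = (\<Prod>k\<in>S. Id1 (x!k) (y!k)) * (\<Prod>k\<in>{..<N} - S. A (x!k) (y!k))" .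
    have "(\<Prod>k\<in>S. of_real s * Id1 (x!k) (y!k)) = of_real s ^ card S * (\<Prod>k\<in>S. Id1 (x!k) (y!k))"
      by (simp add: prod.distrib)
    then show "(\<Prod>k\<in>S. of_real s * Id1 (x!k) (y!k)) * (\<Prod>k\<in>{..<N}-S. A (x!k) (y!k)) =
        of_real (s ^ card S) * tensorN N (\<lambda>k. if k \<in> S then Id1 else A) x y"
      unfolding t by (simp add: of_real_power mult.assoc)
  qed
  also have "\<dots> = (\<Sum>j\<in>{0..N}. \<Sum>S\<in>{S \<in> Pow {..<N}. card S = j}. of_real (s ^ card S) * tensorN N (\<lambda>k. if k \<in> S then Id1 else A) x y)"
  proof (rule sum.group[symmetric])
    show "finite (Pow {..<(N::nat)})" by simp
    show "finite {0..N}" by simp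
    show "card ` Pow {..<N} \<subseteq> {0..N}"
    proof
      fix j assume "j \<in> card ` Pow {..<N}"
      then obtain S where "S \<subseteq> {..<N}" "j = card S" by auto
      then have "j \<le> card {..<N}" using card_mono[of "{..<N}" S] by simp
      then show "j \<in> {0..N}" by simp
    qed
  qed
  also have "\<dots> = (\<Sum>j=0..N. of_real (s^j) * sym_sum N j A x y)"
  proof (rule sum.cong[OF refl])
    fix j assume "j \<in> {0..N}"
    have e: "{S \<in> Pow {..<N}. card S = j} = {S. S \<subseteq> {..<N} \<and> card S = j}" by auto
    show "(\<Sum>S\<in>{S \<in> Pow {..<N}. card S = j}. of_real (s ^ card S) * tensorN N (\<lambda>k. if k \<in> S then Id1 else A) x y) =
      of_real (s^j) * sym_sum N j A x y"
      unfolding e sym_sum_def by (simp add: sum_distrib_left)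
  qed
  finally show ?thesis .
qed

lemma entry_id:
  "of_real ((1 + r^2)/2) * Id1 u v + pauli_comb (r * cos t) (- r * sin t) ((1 - r^2)/2) u v
   = (if u then of_real r * cis (-t) else 1) * (if v then of_real r * cis t else 1)"
proof -
  have tt: "of_real r * cis (-t) * (of_real r * cis t) = (of_real (r^2) :: complex)"
  proof -
    have "of_real r * cis (-t) * (of_real r * cis t) = of_real r * of_real r * (cis (-t) * cis t)"
      by (simp add: algebra_simps)
    also have "cis (-t) * cis t = 1" by (simp add: cis_mult)
    finally show ?thesis by (simp add: power2_eq_square)
  qed
  have ft: "of_real r * cis t = (of_real (r * cos t) + \<i> * of_real (r * sin t) :: complex)"
    by (simp add: complex_eq_iff)
  have tf: "of_real r * cis (-t) = (of_real (r * cos t) - \<i> * of_real (r * sin t) :: complex)"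
    by (simp add: complex_eq_iff)
  show ?thesis
  proof (cases u; cases v)
    assume "u" "v"
    then show ?thesis using tt
      by (simp add: Id1_def pauli_comb_def sigmaX_def sigmaY_def sigmaZ_def field_simps)
  next
    assume "u" "\<not> v"
    then show ?thesis using tf
      by (simp add: Id1_def pauli_comb_def sigmaX_def sigmaY_def sigmaZ_def)
  next
    assume "\<not> u" "v"
    then show ?thesis using ft
      by (simp add: Id1_def pauli_comb_def sigmaX_def sigmaY_def sigmaZ_def)
  next
    assume "\<not> u" "\<not> v"
    then show ?thesis
      by (simp add: Id1_def pauli_comb_def sigmaX_def sigmaY_def sigmaZ_def field_simps)
  qed
qed




lemma sum_list_swap: "(\<Sum>l\<in>A. sum_list (map (g l) cs)) = sum_list (map (\<lambda>p. \<Sum>l\<in>A. g l p) cs)"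
  by (induction cs) (simp_all add: sum.distrib)

lemma sum_list_ofreal: "sum_list (map (\<lambda>p. (of_real (h p) :: complex)) cs) = of_real (sum_list (map h cs))"
  by (induction cs) simp_all

lemma sum_shift1: "(\<Sum>i=1..(n::nat). g (i - 1)) = (\<Sum>i<n. (g i :: complex))"
  by (induction n) simp_all

lemma sum_list_concat_map: "sum_list (map F (concat xss)) = sum_list (map (\<lambda>xs. sum_list (map F xs)) xss)"
  by (induction xss) simp_all

lemma sum_list_div: "sum_list (map (\<lambda>p. f p / (z::real)) cs) = sum_list (map f cs) / z"
  by (induction cs) (simp_all add: add_divide_distrib)

lemma sum_list_zero: "sum_list (map (\<lambda>p. (0::complex)) cs) = 0"
  by (induction cs) simp_all

lemma sum_list_upt0: "sum_list (map h [0..<K]) = (\<Sum>l<K. (h l :: complex))"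
  by (induction K) simp_all

lemma phase_pow: "(of_real \<rho> * cis (-t))^a * (of_real \<rho> * cis t)^b = of_real \<rho> ^ (a+b) * cis (t * (real b - real a))"
proof -
  have "(of_real \<rho> * cis (-t))^a * (of_real \<rho> * cis t)^b = of_real \<rho> ^ (a+b) * (cis (-t) ^ a * cis t ^ b)"
    by (simp add: power_mult_distrib power_add algebra_simps)
  also have "cis (-t) ^ a * cis t ^ b = cis (real a * (-t) + real b * t)"
    by (simp add: DeMoivre cis_mult)
  also have "real a * (-t) + real b * t = t * (real b - real a)" by (simp add: algebra_simps)
  finally show ?thesis .
qed

lemma existence:
  assumes N1: "1 \<le> N"
  shows "\<exists>n. CS_decomp N (W_op N) n"
proof -
  obtain cs where cs: "\<forall>p\<in>set cs. 0 \<le> snd p" "\<forall>a\<le>N. mom cs a = (if a = 1 then 1 else 0)"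
    using mom_dual[of 1 N] N1 by auto
  define K where "K = Suc N"
  define G where "G l p = (fst p / (real N * real K), 2 * pi * real l / real K, sqrt (snd p))"
    for l :: nat and p :: "real \<times> real"
  define T where "T = concat (map (\<lambda>l. map (G l) cs) [0..<K])"
  define w where "w i = fst (T ! (i - 1))" for i
  define th where "th i = fst (snd (T ! (i - 1)))" for i
  define r where "r i = snd (snd (T ! (i - 1)))" for i
  define b where "b i = r i * cos (th i)" for i
  define c where "c i = - r i * sin (th i)" for i
  define d where "d i = (1 - (r i)^2) / 2" for i
  define alpha where "alpha i j = w i * ((1 + (r i)^2)/2)^j" for i j
  have H: "\<forall>x y. length x = N \<longrightarrow> length y = N \<longrightarrow> W_op N x y = (\<Sum>i=1..length T. \<Sum>j=0..N. of_real (alpha i j) * sym_sum N j (pauli_comb (b i) (c i) (d i)) x y)"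
  proof (intro allI impI)
    fix x y :: "bool list" assume lx: "length x = N" and ly: "length y = N"
    define na where "na = length (filter id x)"
    define nb where "nb = length (filter id y)"
    have na: "na \<le> N" unfolding na_def using lx length_filter_le by metis
    have nb: "nb \<le> N" unfolding nb_def using ly length_filter_le by metis
    define F where "F q = of_real (fst q) * of_real (snd (snd q)) ^ (na + nb) * cis (fst (snd q) * (real nb - real na))"
      for q :: "real \<times> real \<times> real"
    have tm: "(\<Sum>j=0..N. of_real (alpha i j) * sym_sum N j (pauli_comb (b i) (c i) (d i)) x y) = F (T ! (i - 1))" for i
    proof -
      have "(\<Sum>j=0..N. of_real (alpha i j) * sym_sum N j (pauli_comb (b i) (c i) (d i)) x y)
          = of_real (w i) * (\<Sum>j=0..N. of_real (((1 + (r i)^2)/2)^j) * sym_sum N j (pauli_comb (b i) (c i) (d i)) x y)"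
        by (simp add: alpha_def sum_distrib_left mult.assoc)
      also have "\<dots> = of_real (w i) * (\<Prod>k<N. of_real ((1 + (r i)^2)/2) * Id1 (x!k) (y!k) + pauli_comb (b i) (c i) (d i) (x!k) (y!k))"
        by (simp only: prod_sym_sum)
      also have "\<dots> = of_real (w i) * (\<Prod>k<N. (if x!k then of_real (r i) * cis (- th i) else 1) * (if y!k then of_real (r i) * cis (th i) else 1))"
        unfolding b_def c_def d_def entry_id ..
      also have "\<dots> = of_real (w i) * ((of_real (r i) * cis (- th i)) ^ na * (of_real (r i) * cis (th i)) ^ nb)"
        using prod_count[of "\<lambda>u. if u then of_real (r i) * cis (- th i) else 1" x]
          prod_count[of "\<lambda>u. if u then of_real (r i) * cis (th i) else 1" y] lx ly
        by (simp add: prod.distrib na_def nb_def)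
      also have "\<dots> = of_real (w i) * of_real (r i) ^ (na + nb) * cis (th i * (real nb - real na))"
        by (simp add: phase_pow mult.assoc)
      also have "\<dots> = F (T ! (i - 1))" by (simp add: F_def w_def r_def th_def)
      finally show ?thesis .
    qed
    have "(\<Sum>i=1..length T. \<Sum>j=0..N. of_real (alpha i j) * sym_sum N j (pauli_comb (b i) (c i) (d i)) x y)
        = (\<Sum>i=1..length T. F (T ! (i - 1)))" by (simp add: tm)
    also have "\<dots> = (\<Sum>i<length T. F (T ! i))" by (rule sum_shift1)
    also have "\<dots> = sum_list (map F T)"
      by (simp add: sum_list_sum_nth atLeast0LessThan)
    also have "\<dots> = (\<Sum>l<K. sum_list (map (\<lambda>p. F (G l p)) cs))"
      by (simp add: T_def sum_list_concat_map sum_list_upt0 comp_def)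
    also have "\<dots> = sum_list (map (\<lambda>p. \<Sum>l<K. F (G l p)) cs)" by (rule sum_list_swap)
    also have "\<dots> = sum_list (map (\<lambda>p. of_real (if na = nb then fst p * snd p ^ na / real N else 0)) cs)"
    proof (rule arg_cong[of _ _ sum_list], rule map_cong[OF refl])
      fix p assume p: "p \<in> set cs"
      have t0: "0 \<le> snd p" using cs(1) p by blast
      have K0: "K > 0" by (simp add: K_def)
      have arg: "2 * pi * real l / real K * (real nb - real na) = 2 * pi * real l * real_of_int (int nb - int na) / real K" for l
        by simp
      have "(\<Sum>l<K. F (G l p)) = of_real (fst p / (real N * real K)) * of_real (sqrt (snd p)) ^ (na + nb) *
          (\<Sum>l<K. cis (2 * pi * real l * real_of_int (int nb - int na) / real K))"
        by (simp add: F_def G_def arg sum_distrib_left)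
      also have "(\<Sum>l<K. cis (2 * pi * real l * real_of_int (int nb - int na) / real K)) =
          (if int nb - int na = 0 then of_nat K else 0)"
        by (rule avg_phase[OF K0]) (use na nb in \<open>auto simp: K_def\<close>)
      finally have s: "(\<Sum>l<K. F (G l p)) = of_real (fst p / (real N * real K)) * of_real (sqrt (snd p)) ^ (na + nb) *
          (if int nb - int na = 0 then of_nat K else 0)" .
      show "(\<Sum>l<K. F (G l p)) = of_real (if na = nb then fst p * snd p ^ na / real N else 0)"
      proof (cases "na = nb")
        case True
        have sq: "sqrt (snd p) ^ (na + nb) = snd p ^ na"
          using True t0 by (simp add: mult_2[symmetric] power_mult)
        have "(\<Sum>l<K. F (G l p)) = of_real (fst p / (real N * real K) * sqrt (snd p) ^ (na + nb) * real K)"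
          using s True by simp
        also have "\<dots> = of_real (fst p * snd p ^ na / real N)"
          unfolding sq using K0 by (simp add: field_simps)
        finally show ?thesis using True by simp
      next
        case False
        then have "int nb - int na \<noteq> 0" by simp
        then show ?thesis using s False by simp
      qed
    qed
    also have "\<dots> = of_real (if na = nb then mom cs na / real N else 0)"
    proof (cases "na = nb")
      case True
      have e: "(\<lambda>p. (of_real (if na = nb then fst p * snd p ^ na / real N else 0) :: complex)) = (\<lambda>p. of_real (fst p * snd p ^ na / real N))"
        using True by simp
      show ?thesis by (simp only: e sum_list_ofreal sum_list_div) (simp add: mom_def True)
    next
      case False
      then show ?thesis by (simp add: sum_list_zero)
    qed
    also have "\<dots> = W_op N x y"
      using W_op_val[of N x y] N1 lx ly cs(2) na by (simp add: na_def nb_def)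
    finally show "W_op N x y = (\<Sum>i=1..length T. \<Sum>j=0..N. of_real (alpha i j) * sym_sum N j (pauli_comb (b i) (c i) (d i)) x y)"
      by simp
  qed
  then have "CS_decomp N (W_op N) (length T)"
    unfolding CS_decomp_def by blast
  then show ?thesis by blast
qed



theorem corollary2:
  fixes N :: nat
  assumes "N \<ge> 2"
  shows "N - 1 \<le> C_S N (W_op N)"
  unfolding C_S_def
proof (rule LeastI2_ex)
  show "\<exists>n. CS_decomp N (W_op N) n" using existence assms by simp
next
  fix n assume "CS_decomp N (W_op N) n"
  then show "N - 1 \<le> n" using lower assms by blast
qed

end
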